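(* Let $T$ be a locally finite triangulation of the $\infty$-gon (so $T$ consists of finite arcs only), and let $\mathcal{T}$ be the subcategory of $\mathcal{C}_2$ whose indecomposable objects correspond to the arcs of $T$ (a maximal rigid subcategory of $\mathcal{C}_2$). Then $\mathcal{T}$ is not precovering in $\mathcal{C}_2$, and hence not functorially finite.
   Context: Let $R=\mathbb{C}[x,y]/(x^2)$, graded with $\deg x=1$, $\deg y=-1$; $M(j)_n=M_{j+n}$. $\mathcal{C}_2$ is the Frobenius category of finitely generated $\mathbb{Z}$-graded maximal Cohen–Macaulay $R$-modules with degree-preserving morphisms. Arcs $(a,b)$, $a\in\mathbb{Z}\cup\{-\infty\}$, $b\in\mathbb{Z}$, $a<b$, correspond to indecomposables via $(x,y^k)(j)\leftrightarrow(-j-k,1-j)$ ($k\ge0$, $(x,y^0)=R$) and $\mathbb{C}[y](j)=(R/(x))(j)\leftrightarrow(-\infty,-j)$; arcs of the $\infty$-gon are those with $a\in\mathbb{Z}$. Arcs $(a,b),(c,d)$ cross if $a<c<b<d$ or $c<a<d<b$; a triangulation of the $\infty$-gon is a maximal set of pairwise non-crossing arcs with integer endpoints; it is locally finite if each integer is an endpoint of only finitely many of its arcs. Subcategories are full, additive, closed under isomorphisms and summands. $\mathcal{T}$ is precovering if every object $M$ of $\mathcal{C}_2$ admits a right $\mathcal{T}$-approximation, i.e. a morphism $T\to M$ with $T\in\mathcal{T}$ through which every morphism $T'\to M$ with $T'\in\mathcal{T}$ factors. *)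

theory Defs
  imports Complex_Main
begin

text \<open>Homogeneous components of graded modules are realised as complex subspaces
of the fixed complex vector space of all functions nat to complex (which has
countably-infinite-and-more dimension, so every finitely generated graded module,
whose components are finite-dimensional, has an isomorphic copy here).\<close>

type_synonym vec = "nat \<Rightarrow> complex"

definition vzero :: vec where "vzero = (\<lambda>_. 0)"
definition vadd :: "vec \<Rightarrow> vec \<Rightarrow> vec" where "vadd u v = (\<lambda>i. u i + v i)"
definition vsc :: "complex \<Rightarrow> vec \<Rightarrow> vec" where "vsc c v = (\<lambda>i. c * v i)"

definition csubspace :: "vec set \<Rightarrow> bool" where
  "csubspace S \<longleftrightarrow> vzero \<in> S \<and> (\<forall>u\<in>S. \<forall>v\<in>S. vadd u v \<in> S) \<and> (\<forall>c. \<forall>v\<in>S. vsc c v \<in> S)"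

definition clinear_on :: "vec set \<Rightarrow> (vec \<Rightarrow> vec) \<Rightarrow> bool" where
  "clinear_on S f \<longleftrightarrow> (\<forall>u\<in>S. \<forall>v\<in>S. f (vadd u v) = vadd (f u) (f v)) \<and> (\<forall>c. \<forall>v\<in>S. f (vsc c v) = vsc c (f v))"

definition cspan :: "vec set \<Rightarrow> vec set" where
  "cspan S = {v. \<exists>F c. finite F \<and> F \<subseteq> S \<and> v = (\<lambda>i. \<Sum>s\<in>F. c s * s i)}"

section \<open>Graded modules over R = C[x,y]/(x^2), deg x = 1, deg y = -1\<close>

record gmod =
  comp :: "int \<Rightarrow> vec set"
  xa :: "int \<Rightarrow> vec \<Rightarrow> vec"
  ya :: "int \<Rightarrow> vec \<Rightarrow> vec"

definition graded_module :: "gmod \<Rightarrow> bool" where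
  "graded_module M \<longleftrightarrow>
     (\<forall>n. csubspace (comp M n)) \<and>
     (\<forall>n. clinear_on (comp M n) (xa M n) \<and> xa M n ` comp M n \<subseteq> comp M (n + 1)) \<and>
     (\<forall>n. clinear_on (comp M n) (ya M n) \<and> ya M n ` comp M n \<subseteq> comp M (n - 1)) \<and>
     (\<forall>n. \<forall>v\<in>comp M n. ya M (n + 1) (xa M n v) = xa M (n - 1) (ya M n v)) \<and>
     (\<forall>n. \<forall>v\<in>comp M n. xa M (n + 1) (xa M n v) = vzero)"

fun xpow :: "gmod \<Rightarrow> nat \<Rightarrow> int \<Rightarrow> vec \<Rightarrow> vec" where
  "xpow M 0 d v = v"
| "xpow M (Suc b) d v = xa M (d + int b) (xpow M b d v)"

fun ypow :: "gmod \<Rightarrow> nat \<Rightarrow> int \<Rightarrow> vec \<Rightarrow> vec" where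
  "ypow M 0 d v = v"
| "ypow M (Suc a) d v = ya M (d - int a) (ypow M a d v)"

definition fin_gen :: "gmod \<Rightarrow> bool" where
  "fin_gen M \<longleftrightarrow> (\<exists>G. finite G \<and> (\<forall>(d, g)\<in>G. g \<in> comp M d) \<and>
     (\<forall>n. comp M n = cspan {ypow M a (d + int b) (xpow M b d g) | a b d g.
                               (d, g) \<in> G \<and> d + int b - int a = n}))"

text \<open>Maximal Cohen-Macaulay (R has Krull dimension 1): the homogeneous parameter y is
a nonzerodivisor on M, i.e. depth M = 1.\<close>
definition MCM :: "gmod \<Rightarrow> bool" where
  "MCM M \<longleftrightarrow> (\<forall>n. \<forall>v\<in>comp M n. ya M n v = vzero \<longrightarrow> v = vzero)"

definition C2obj :: "gmod \<Rightarrow> bool" where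
  "C2obj M \<longleftrightarrow> graded_module M \<and> fin_gen M \<and> MCM M"

type_synonym gmor = "int \<Rightarrow> vec \<Rightarrow> vec"

definition hom :: "gmod \<Rightarrow> gmod \<Rightarrow> gmor \<Rightarrow> bool" where
  "hom M N f \<longleftrightarrow>
     (\<forall>n. clinear_on (comp M n) (f n) \<and> f n ` comp M n \<subseteq> comp N n) \<and>
     (\<forall>n. \<forall>v\<in>comp M n. f (n + 1) (xa M n v) = xa N n (f n v)) \<and>
     (\<forall>n. \<forall>v\<in>comp M n. f (n - 1) (ya M n v) = ya N n (f n v))"

definition meq :: "gmod \<Rightarrow> gmor \<Rightarrow> gmor \<Rightarrow> bool" where
  "meq M f g \<longleftrightarrow> (\<forall>n. \<forall>v\<in>comp M n. f n v = g n v)"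

definition mcomp :: "gmor \<Rightarrow> gmor \<Rightarrow> gmor" where
  "mcomp g f = (\<lambda>n v. g n (f n v))"

definition mid :: gmor where "mid = (\<lambda>n v. v)"
definition mzero :: gmor where "mzero = (\<lambda>n v. vzero)"

definition is_dsum :: "gmod \<Rightarrow> nat \<Rightarrow> (nat \<Rightarrow> gmod) \<Rightarrow> bool" where
  "is_dsum M k N \<longleftrightarrow> (\<exists>\<iota> \<pi> :: nat \<Rightarrow> gmor.
     (\<forall>i<k. hom (N i) M (\<iota> i) \<and> hom M (N i) (\<pi> i)) \<and>
     (\<forall>i<k. \<forall>j<k. meq (N j) (mcomp (\<pi> i) (\<iota> j)) (if i = j then mid else mzero)) \<and>
     meq M (\<lambda>n v. (\<lambda>t. \<Sum>i<k. \<iota> i n (\<pi> i n v) t)) mid)"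

text \<open>The module (x,y^k)(j). An element of R_m is c0 y^(-m) + c1 x y^(1-m)
(the first term present only if m \<le> 0, the second only if m \<le> 1); it is encoded as
the vector with entries c0 at 0 and c1 at 1. The ideal (x,y^k) has in degree m the
elements with c0 = 0 unless -m \<ge> k. The shift is M(j)_n = M_(j+n).\<close>
definition idl_mod :: "nat \<Rightarrow> int \<Rightarrow> gmod" where
  "idl_mod k j = \<lparr> comp = (\<lambda>n. {v. (\<forall>i\<ge>2. v i = 0) \<and>
                                       (\<not> (j + n \<le> - int k) \<longrightarrow> v 0 = 0) \<and>
                                       (\<not> (j + n \<le> 1) \<longrightarrow> v 1 = 0)}),
                   xa = (\<lambda>n v. (\<lambda>i. if i = 1 then v 0 else 0)),
                   ya = (\<lambda>n v. v) \<rparr>"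

text \<open>Arcs (a,b) with integer endpoints a < b; the arc (-j-k, 1-j) corresponds to
(x,y^k)(j), i.e. (a,b) corresponds to (x,y^(b-1-a))(1-b).\<close>
definition arc_mod :: "int \<times> int \<Rightarrow> gmod" where
  "arc_mod ab = idl_mod (nat (snd ab - 1 - fst ab)) (1 - snd ab)"

definition is_arc :: "int \<times> int \<Rightarrow> bool" where
  "is_arc ab \<longleftrightarrow> fst ab < snd ab"

definition crosses :: "int \<times> int \<Rightarrow> int \<times> int \<Rightarrow> bool" where
  "crosses ab cd \<longleftrightarrow> (let (a, b) = ab; (c, d) = cd in
      (a < c \<and> c < b \<and> b < d) \<or> (c < a \<and> a < d \<and> d < b))"

definition triangulation :: "(int \<times> int) set \<Rightarrow> bool" where
  "triangulation T \<longleftrightarrow> (\<forall>\<alpha>\<in>T. is_arc \<alpha>) \<and>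
     (\<forall>\<alpha>\<in>T. \<forall>\<beta>\<in>T. \<not> crosses \<alpha> \<beta>) \<and>
     (\<forall>\<gamma>. is_arc \<gamma> \<and> \<gamma> \<notin> T \<longrightarrow> (\<exists>\<alpha>\<in>T. crosses \<alpha> \<gamma>))"

definition locally_finite :: "(int \<times> int) set \<Rightarrow> bool" where
  "locally_finite T \<longleftrightarrow> (\<forall>n. finite {\<alpha>\<in>T. fst \<alpha> = n \<or> snd \<alpha> = n})"

definition arc_subcat :: "(int \<times> int) set \<Rightarrow> gmod \<Rightarrow> bool" where
  "arc_subcat T M \<longleftrightarrow> C2obj M \<and>
     (\<exists>k N. (\<forall>i<k. \<exists>\<alpha>\<in>T. N i = arc_mod \<alpha>) \<and> is_dsum M k N)"

definition right_approx :: "(gmod \<Rightarrow> bool) \<Rightarrow> gmod \<Rightarrow> gmod \<Rightarrow> gmor \<Rightarrow> bool" where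
  "right_approx \<T> M X f \<longleftrightarrow> \<T> X \<and> hom X M f \<and>
     (\<forall>Y g. \<T> Y \<and> hom Y M g \<longrightarrow> (\<exists>h. hom Y X h \<and> meq Y g (mcomp f h)))"

definition left_approx :: "(gmod \<Rightarrow> bool) \<Rightarrow> gmod \<Rightarrow> gmod \<Rightarrow> gmor \<Rightarrow> bool" where
  "left_approx \<T> M X f \<longleftrightarrow> \<T> X \<and> hom M X f \<and>
     (\<forall>Y g. \<T> Y \<and> hom M Y g \<longrightarrow> (\<exists>h. hom X Y h \<and> meq M g (mcomp h f)))"

definition precovering :: "(gmod \<Rightarrow> bool) \<Rightarrow> bool" where
  "precovering \<T> \<longleftrightarrow> (\<forall>M. C2obj M \<longrightarrow> (\<exists>X f. right_approx \<T> M X f))"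

definition preenveloping :: "(gmod \<Rightarrow> bool) \<Rightarrow> bool" where
  "preenveloping \<T> \<longleftrightarrow> (\<forall>M. C2obj M \<longrightarrow> (\<exists>X f. left_approx \<T> M X f))"

definition functorially_finite :: "(gmod \<Rightarrow> bool) \<Rightarrow> bool" where
  "functorially_finite \<T> \<longleftrightarrow> precovering \<T> \<and> preenveloping \<T>"

end

theory Submission
  imports Defs
begin

lemma crosses_iff: "crosses (a,b) (c,d) \<longleftrightarrow> (a<c \<and> c<b \<and> b<d) \<or> (c<a \<and> a<d \<and> d<b)"
  by (simp add: crosses_def)

lemma S_infinite:
  assumes tri: "triangulation T" and lf: "locally_finite T"
  shows "infinite {\<alpha>\<in>T. fst \<alpha> \<le> p \<and> p < snd \<alpha>}"
proof
  define S where "S = {\<alpha>\<in>T. fst \<alpha> \<le> p \<and> p < snd \<alpha>}"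
  assume fin: "finite {\<alpha>\<in>T. fst \<alpha> \<le> p \<and> p < snd \<alpha>}"
  hence finS: "finite S" by (simp add: S_def)
  have arcs: "\<And>\<alpha>. \<alpha> \<in> T \<Longrightarrow> is_arc \<alpha>" and nc: "\<And>\<alpha> \<beta>. \<alpha> \<in> T \<Longrightarrow> \<beta> \<in> T \<Longrightarrow> \<not> crosses \<alpha> \<beta>"
    and mx: "\<And>\<gamma>. is_arc \<gamma> \<Longrightarrow> \<gamma> \<notin> T \<Longrightarrow> \<exists>\<alpha>\<in>T. crosses \<alpha> \<gamma>"
    using tri unfolding triangulation_def by blast+
  have "(p, p+1) \<in> T"
  proof (rule ccontr)
    assume "(p, p+1) \<notin> T"
    then obtain \<alpha> where "\<alpha> \<in> T" "crosses \<alpha> (p, p+1)" using mx[of "(p,p+1)"] by (auto simp: is_arc_def)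
    then show False by (cases \<alpha>) (auto simp: crosses_iff)
  qed
  hence "(p,p+1) \<in> S" by (simp add: S_def)
  hence Sne: "S \<noteq> {}" by blast
  define as where "as = Min (fst ` S)"
  have as_in: "as \<in> fst ` S" using finS Sne by (simp add: as_def)
  have as_le: "\<And>\<alpha>. \<alpha> \<in> S \<Longrightarrow> as \<le> fst \<alpha>" using finS by (simp add: as_def)
  define S' where "S' = {\<alpha>\<in>S. fst \<alpha> = as}"
  have finS': "finite S'" using finS by (simp add: S'_def)
  have S'ne: "S' \<noteq> {}" using as_in by (auto simp: S'_def)
  define bs where "bs = Max (snd ` S')"
  have bs_in: "bs \<in> snd ` S'" using finS' S'ne by (simp add: bs_def)
  have bs_ge: "\<And>\<alpha>. \<alpha> \<in> S' \<Longrightarrow> snd \<alpha> \<le> bs" using finS' by (simp add: bs_def)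
  have abS: "(as, bs) \<in> S" using bs_in by (auto simp: S'_def)
  hence abT: "(as,bs) \<in> T" and asp: "as \<le> p" and pbs: "p < bs" by (auto simp: S_def)
  have outer: "\<And>a b. (a,b) \<in> S \<Longrightarrow> as \<le> a \<and> b \<le> bs"
  proof -
    fix a b assume ab: "(a,b) \<in> S"
    have "as \<le> a" using as_le[OF ab] by simp
    moreover have "b \<le> bs"
    proof (rule ccontr)
      assume nb: "\<not> b \<le> bs"
      show False
      proof (cases "a = as")
        case True
        then have "(a,b) \<in> S'" using ab by (simp add: S'_def)
        then show False using bs_ge nb by fastforce
      next
        case False
        with \<open>as \<le> a\<close> have "as < a" by simp
        moreover have "a < bs" using ab pbs by (simp add: S_def)
        ultimately have "crosses (as,bs) (a,b)" using nb by (simp add: crosses_iff)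
        then show False using nc abT ab by (auto simp: S_def)
      qed
    qed
    ultimately show "as \<le> a \<and> b \<le> bs" by simp
  qed
  define A where "A = {a. (a, as) \<in> T}"
  have "A \<subseteq> fst ` {\<alpha>\<in>T. fst \<alpha> = as \<or> snd \<alpha> = as}" by (force simp: A_def)
  hence finA: "finite A" using lf unfolding locally_finite_def by (meson finite_imageI finite_subset)
  define a1 where "a1 = Min (insert (as - 1) A)"
  have a1_le: "a1 \<le> as - 1" using finA unfolding a1_def by (meson Min_le finite_insert insertI1)
  have a1_leA: "\<And>a. a \<in> A \<Longrightarrow> a1 \<le> a" using finA by (simp add: a1_def)
  have a1_cases: "a1 = as - 1 \<or> a1 \<in> A" using finA Min_in[of "insert (as - 1) A"] by (auto simp: a1_def)
  have "(a1, bs) \<notin> T"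
  proof
    assume "(a1,bs) \<in> T"
    hence "(a1,bs) \<in> S" using a1_le asp pbs by (simp add: S_def)
    then show False using outer a1_le by fastforce
  qed
  moreover have "is_arc (a1,bs)" using a1_le asp pbs by (simp add: is_arc_def)
  ultimately obtain a b where abT': "(a,b) \<in> T" and cr: "crosses (a,b) (a1,bs)" using mx by fastforce
  have ab_lt: "a < b" using arcs[OF abT'] by (simp add: is_arc_def)
  from cr have "(a < a1 \<and> a1 < b \<and> b < bs) \<or> (a1 < a \<and> a < bs \<and> bs < b)" by (simp add: crosses_iff)
  then show False
  proof
    assume h: "a < a1 \<and> a1 < b \<and> b < bs"
    show False
    proof (cases "p < b")
      case True
      hence "(a,b) \<in> S" using abT' h asp a1_le by (simp add: S_def)
      then show False using outer h a1_le by fastforce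
    next
      case False
      consider "as < b" | "b = as" | "b < as" by linarith
      then show False
      proof cases
        case 1
        hence "crosses (a,b) (as,bs)" using h a1_le by (simp add: crosses_iff)
        then show False using nc abT' abT by blast
      next
        case 2
        hence "a \<in> A" using abT' by (simp add: A_def)
        then show False using a1_leA h by fastforce
      next
        case 3
        hence "a1 \<in> A" using a1_cases h by auto
        hence "(a1, as) \<in> T" by (simp add: A_def)
        moreover have "crosses (a,b) (a1,as)" using h 3 by (simp add: crosses_iff)
        ultimately show False using nc abT' by blast
      qed
    qed
  next
    assume h: "a1 < a \<and> a < bs \<and> bs < b"
    show False
    proof (cases "a \<le> p")
      case True
      hence "(a,b) \<in> S" using abT' h pbs by (simp add: S_def)
      then show False using outer h by fastforce
    next
      case False
      hence "crosses (as,bs) (a,b)" using h asp by (simp add: crosses_iff)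
      then show False using nc abT' abT by blast
    qed
  qed
qed

lemma exists_big:
  assumes tri: "triangulation T" and lf: "locally_finite T"
  shows "\<exists>\<alpha>\<in>T. fst \<alpha> \<le> p \<and> p < snd \<alpha> \<and> B < snd \<alpha>"
proof -
  let ?S = "{\<alpha>\<in>T. fst \<alpha> \<le> p \<and> p < snd \<alpha>}"
  have "{\<alpha>\<in>?S. snd \<alpha> \<le> B} \<subseteq> (\<Union>n\<in>{p<..B}. {\<alpha>\<in>T. fst \<alpha> = n \<or> snd \<alpha> = n})" by auto
  moreover have "finite (\<Union>n\<in>{p<..B}. {\<alpha>\<in>T. fst \<alpha> = n \<or> snd \<alpha> = n})"
    using lf unfolding locally_finite_def by blast
  ultimately have "finite {\<alpha>\<in>?S. snd \<alpha> \<le> B}" by (rule finite_subset)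
  hence "infinite (?S - {\<alpha>\<in>?S. snd \<alpha> \<le> B})" using S_infinite[OF tri lf, of p] by (meson Diff_infinite_finite)
  hence "?S - {\<alpha>\<in>?S. snd \<alpha> \<le> B} \<noteq> {}" by (metis finite.emptyI)
  then obtain \<alpha> where "\<alpha> \<in> ?S - {\<alpha>\<in>?S. snd \<alpha> \<le> B}" by blast
  then show ?thesis by force
qed


definition e0 :: vec where "e0 = (\<lambda>i. if i = 0 then 1 else 0)"
definition e1 :: vec where "e1 = (\<lambda>i. if i = 1 then 1 else 0)"

definition Mc :: gmod where
  "Mc = \<lparr> comp = (\<lambda>n. {v. (\<forall>i\<ge>2. v i = 0) \<and> (\<not> n \<le> 0 \<longrightarrow> v 0 = 0) \<and> v 1 = 0}),
          xa = (\<lambda>n v. vzero), ya = (\<lambda>n v. v) \<rparr>"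

lemma e_ne: "e0 \<noteq> e1" "e0 \<noteq> vzero" "e1 \<noteq> vzero" "e1 \<noteq> e0" "vzero \<noteq> e0" "vzero \<noteq> e1"
  by (auto simp: e0_def e1_def vzero_def fun_eq_iff)

lemma arc_comp: "is_arc (a,b) \<Longrightarrow> comp (arc_mod (a,b)) n =
   {v. (\<forall>i\<ge>2. v i = 0) \<and> (\<not> n \<le> a \<longrightarrow> v 0 = 0) \<and> (\<not> n \<le> b \<longrightarrow> v 1 = 0)}"
  by (auto simp: arc_mod_def idl_mod_def is_arc_def)

lemma arc_xa: "xa (arc_mod ab) n v = (\<lambda>i. if i = 1 then v 0 else 0)"
  by (simp add: arc_mod_def idl_mod_def)
lemma arc_ya: "ya (arc_mod ab) n v = v"
  by (simp add: arc_mod_def idl_mod_def)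

lemma Mc_simps: "comp Mc n = {v. (\<forall>i\<ge>2. v i = 0) \<and> (\<not> n \<le> 0 \<longrightarrow> v 0 = 0) \<and> v 1 = 0}"
  "xa Mc n v = vzero" "ya Mc n v = v"
  by (simp_all add: Mc_def)

lemma cspan_small:
  assumes "S \<subseteq> {vzero, e0, e1}"
  shows "cspan S = {v. (\<forall>i\<ge>2. v i = 0) \<and> (e0 \<notin> S \<longrightarrow> v 0 = 0) \<and> (e1 \<notin> S \<longrightarrow> v 1 = 0)}"
proof
  show "cspan S \<subseteq> {v. (\<forall>i\<ge>2. v i = 0) \<and> (e0 \<notin> S \<longrightarrow> v 0 = 0) \<and> (e1 \<notin> S \<longrightarrow> v 1 = 0)}"
  proof
    fix v assume "v \<in> cspan S"
    then obtain F c where F: "finite F" "F \<subseteq> S" and v: "v = (\<lambda>i. \<Sum>s\<in>F. c s * s i)"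
      unfolding cspan_def by blast
    have sF: "\<And>s. s \<in> F \<Longrightarrow> s = vzero \<or> s = e0 \<or> s = e1" using F assms by blast
    have "\<forall>i\<ge>2. v i = 0"
    proof (intro allI impI)
      fix i :: nat assume "2 \<le> i"
      then have "\<And>s. s \<in> F \<Longrightarrow> c s * s i = 0" using sF by (fastforce simp: vzero_def e0_def e1_def)
      then show "v i = 0" unfolding v by (intro sum.neutral) blast
    qed
    moreover have "e0 \<notin> S \<longrightarrow> v 0 = 0"
    proof
      assume "e0 \<notin> S"
      then have "\<And>s. s \<in> F \<Longrightarrow> c s * s 0 = 0" using sF F by (fastforce simp: vzero_def e1_def)
      then show "v 0 = 0" unfolding v by (intro sum.neutral) blast
    qed
    moreover have "e1 \<notin> S \<longrightarrow> v 1 = 0"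
    proof
      assume "e1 \<notin> S"
      then have "\<And>s. s \<in> F \<Longrightarrow> c s * s 1 = 0" using sF F by (fastforce simp: vzero_def e0_def)
      then show "v 1 = 0" unfolding v by (intro sum.neutral) blast
    qed
    ultimately show "v \<in> {v. (\<forall>i\<ge>2. v i = 0) \<and> (e0 \<notin> S \<longrightarrow> v 0 = 0) \<and> (e1 \<notin> S \<longrightarrow> v 1 = 0)}" by simp
  qed
next
  show "{v. (\<forall>i\<ge>2. v i = 0) \<and> (e0 \<notin> S \<longrightarrow> v 0 = 0) \<and> (e1 \<notin> S \<longrightarrow> v 1 = 0)} \<subseteq> cspan S"
  proof
    fix v :: vec assume "v \<in> {v. (\<forall>i\<ge>2. v i = 0) \<and> (e0 \<notin> S \<longrightarrow> v 0 = 0) \<and> (e1 \<notin> S \<longrightarrow> v 1 = 0)}"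
    hence v2: "\<And>i. 2 \<le> i \<Longrightarrow> v i = 0" and v0: "e0 \<notin> S \<Longrightarrow> v 0 = 0" and v1: "e1 \<notin> S \<Longrightarrow> v 1 = 0" by auto
    define F where "F = S \<inter> {e0, e1}"
    define c where "c = (\<lambda>s. if s = e0 then v 0 else v 1)"
    have "v = (\<lambda>i. \<Sum>s\<in>F. c s * s i)"
    proof
      fix i :: nat
      have ne: "e0 \<noteq> e1" by (rule e_ne)
      consider "i = 0" | "i = 1" | "2 \<le> i" by linarith
      then show "v i = (\<Sum>s\<in>F. c s * s i)"
      proof cases
        case 1 then show ?thesis using ne v0
          by (cases "e0 \<in> S"; cases "e1 \<in> S") (auto simp: F_def c_def e0_def e1_def insert_Diff_if)
      next
        case 2 then show ?thesis using ne v1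
          by (cases "e0 \<in> S"; cases "e1 \<in> S") (auto simp: F_def c_def e0_def e1_def insert_Diff_if)
      next
        case 3 then show ?thesis using ne v2[OF 3]
          by (cases "e0 \<in> S"; cases "e1 \<in> S") (auto simp: F_def c_def e0_def e1_def insert_Diff_if)
      qed
    qed
    moreover have "finite F" "F \<subseteq> S" by (auto simp: F_def)
    ultimately show "v \<in> cspan S" unfolding cspan_def by blast
  qed
qed


lemma ypow_id: "(\<And>n v. ya M n v = v) \<Longrightarrow> ypow M m d v = v"
  by (induction m) auto

lemma xpow_arc: "xpow (arc_mod ab) t d v = (if t = 0 then v else if t = 1 then (\<lambda>i. if i = 1 then v 0 else 0) else vzero)"
proof (induction t)
  case 0 then show ?case by simp
next
  case (Suc t) then show ?case by (auto simp: arc_xa vzero_def fun_eq_iff)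
qed

lemma xpow_Mc: "xpow Mc t d v = (if t = 0 then v else vzero)"
  by (induction t) (auto simp: Mc_simps)

lemma xe0: "(\<lambda>i. if i = 1 then e0 0 else 0) = e1" and xe1: "(\<lambda>i. if i = 1 then e1 0 else (0::complex)) = vzero"
  by (auto simp: e0_def e1_def vzero_def fun_eq_iff)

lemma xe0': "(\<lambda>i. if i = Suc 0 then e0 0 else 0) = e1" and xe1': "(\<lambda>i. if i = Suc 0 then e1 0 else (0::complex)) = vzero"
  by (auto simp: e0_def e1_def vzero_def fun_eq_iff)

lemma graded_arc: "is_arc (a,b) \<Longrightarrow> graded_module (arc_mod (a,b))"
  unfolding graded_module_def csubspace_def clinear_on_def
  by (auto simp: arc_comp arc_xa arc_ya vzero_def vadd_def vsc_def is_arc_def)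

lemma graded_Mc: "graded_module Mc"
  unfolding graded_module_def csubspace_def clinear_on_def
  by (auto simp: Mc_simps vzero_def vadd_def vsc_def)

lemma fin_gen_arc:
  assumes arc: "is_arc (a,b)"
  shows "fin_gen (arc_mod (a,b))"
  unfolding fin_gen_def
proof (intro exI conjI allI)
  let ?M = "arc_mod (a,b)"
  let ?G = "{(a,e0),(b,e1)}"
  show "finite ?G" by simp
  show "\<forall>(d, g)\<in>?G. g \<in> comp ?M d" using arc by (auto simp: arc_comp e0_def e1_def is_arc_def)
  fix n
  let ?X = "{ypow ?M a' (d + int t) (xpow ?M t d g) | a' t d g. (d, g) \<in> ?G \<and> d + int t - int a' = n}"
  have X: "?X = {xpow ?M t d g | a' t d g. (d, g) \<in> ?G \<and> d + int t - int a' = n}"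
    by (simp add: ypow_id arc_ya)
  have sub: "?X \<subseteq> {vzero, e0, e1}" unfolding X
    by (auto simp: xpow_arc xe0 xe1 xe0' xe1')
  have "e0 \<in> ?X \<longleftrightarrow> n \<le> a"
  proof
    assume "e0 \<in> ?X"
    then obtain a' t d g where h: "e0 = xpow ?M t d g" "(d, g) \<in> ?G" "d + int t - int a' = n" unfolding X by blast
    then show "n \<le> a" using e_ne by (auto simp: xpow_arc xe0 xe1 xe0' xe1' split: if_splits)
  next
    assume "n \<le> a"
    then have "e0 = xpow ?M 0 a e0 \<and> (a, e0) \<in> ?G \<and> a + int 0 - int (nat (a - n)) = n" by simp
    then show "e0 \<in> ?X" unfolding X by blast
  qed
  moreover have "e1 \<in> ?X \<longleftrightarrow> n \<le> b"
  proof
    assume "e1 \<in> ?X"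
    then obtain a' t d g where h: "e1 = xpow ?M t d g" "(d, g) \<in> ?G" "d + int t - int a' = n" unfolding X by blast
    then show "n \<le> b" using e_ne arc by (auto simp: xpow_arc xe0 xe1 xe0' xe1' is_arc_def split: if_splits)
  next
    assume "n \<le> b"
    then have "e1 = xpow ?M 0 b e1 \<and> (b, e1) \<in> ?G \<and> b + int 0 - int (nat (b - n)) = n" by simp
    then show "e1 \<in> ?X" unfolding X by blast
  qed
  ultimately show "comp ?M n = cspan ?X" using cspan_small[OF sub] arc_comp[OF arc] by simp
qed

lemma fin_gen_Mc: "fin_gen Mc"
  unfolding fin_gen_def
proof (intro exI conjI allI)
  let ?M = "Mc"
  let ?G = "{(0::int,e0)}"
  show "finite ?G" by simp
  show "\<forall>(d, g)\<in>?G. g \<in> comp ?M d" by (auto simp: Mc_simps e0_def)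
  fix n
  let ?X = "{ypow ?M a' (d + int t) (xpow ?M t d g) | a' t d g. (d, g) \<in> ?G \<and> d + int t - int a' = n}"
  have X: "?X = {xpow ?M t d g | a' t d g. (d, g) \<in> ?G \<and> d + int t - int a' = n}"
    by (simp add: ypow_id Mc_simps)
  have sub: "?X \<subseteq> {vzero, e0, e1}" unfolding X
    by (auto simp: xpow_Mc)
  have "e0 \<in> ?X \<longleftrightarrow> n \<le> 0"
  proof
    assume "e0 \<in> ?X"
    then obtain a' t d g where h: "e0 = xpow ?M t d g" "(d, g) \<in> ?G" "d + int t - int a' = n" unfolding X by blast
    then show "n \<le> 0" using e_ne by (auto simp: xpow_Mc split: if_splits)
  next
    assume "n \<le> 0"
    then have "e0 = xpow ?M 0 0 e0 \<and> (0, e0) \<in> ?G \<and> 0 + int 0 - int (nat (0 - n)) = n" by simp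
    then show "e0 \<in> ?X" unfolding X by blast
  qed
  moreover have "e1 \<notin> ?X"
  proof
    assume "e1 \<in> ?X"
    then obtain a' t d g where h: "e1 = xpow ?M t d g" "(d, g) \<in> ?G" "d + int t - int a' = n" unfolding X by blast
    then show False using e_ne by (auto simp: xpow_Mc split: if_splits)
  qed
  ultimately show "comp ?M n = cspan ?X" using cspan_small[OF sub] by (simp add: Mc_simps)
qed

lemma C2_arc: "is_arc (a,b) \<Longrightarrow> C2obj (arc_mod (a,b))"
  unfolding C2obj_def MCM_def using graded_arc fin_gen_arc by (simp add: arc_ya)

lemma C2_Mc: "C2obj Mc"
  unfolding C2obj_def MCM_def using graded_Mc fin_gen_Mc by (simp add: Mc_simps)


lemma hom_comp: "hom A B p \<Longrightarrow> hom B C q \<Longrightarrow> hom A C (mcomp q p)"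
  unfolding hom_def clinear_on_def mcomp_def
  by (smt (verit, best) image_subset_iff)

lemma lin_zero: "clinear_on S f \<Longrightarrow> vzero \<in> S \<Longrightarrow> f vzero = vzero"
proof -
  assume l: "clinear_on S f" and z: "vzero \<in> S"
  have "vzero = vsc 0 vzero" by (simp add: vsc_def vzero_def)
  hence "f vzero = f (vsc 0 vzero)" by simp
  also have "\<dots> = vsc 0 (f vzero)" using l z unfolding clinear_on_def by blast
  also have "\<dots> = vzero" by (simp add: vsc_def vzero_def)
  finally show ?thesis .
qed

lemma L1:
  assumes arc: "is_arc (a,b)" and arc': "is_arc (a',b')" and bb: "b < b'"
    and p: "hom (arc_mod (a',b')) (arc_mod (a,b)) p"
  shows "p a' e0 0 = 0"
proof -
  let ?Y = "arc_mod (a',b')" and ?A = "arc_mod (a,b)"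
  have e1Y: "\<And>n. n \<le> b' \<Longrightarrow> e1 \<in> comp ?Y n" using arc' by (simp add: arc_comp e1_def)
  have step: "\<And>n. n \<le> b' \<Longrightarrow> p (n - 1) e1 = p n e1"
    using p e1Y unfolding hom_def by (simp add: arc_ya)
  have ind: "\<And>m. p (b' - int m) e1 = p b' e1"
  proof -
    fix m show "p (b' - int m) e1 = p b' e1"
    proof (induction m)
      case 0 then show ?case by simp
      case (Suc m)
      have "p (b' - int m - 1) e1 = p (b' - int m) e1" by (rule step) simp
      then show ?case using Suc by (simp add: algebra_simps)
    qed
  qed
  have "p (a' + 1) e1 = p b' e1" using ind[of "nat (b' - a' - 1)"] arc' by (simp add: is_arc_def)
  moreover have "p b' e1 \<in> comp ?A b'" using p e1Y[of b'] unfolding hom_def by blast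
  ultimately have c1: "p (a' + 1) e1 1 = 0" using arc bb by (simp add: arc_comp)
  have e0Y: "e0 \<in> comp ?Y a'" using arc' by (simp add: arc_comp e0_def)
  have "p (a' + 1) (xa ?Y a' e0) = xa ?A a' (p a' e0)" using p e0Y unfolding hom_def by blast
  hence "p (a' + 1) e1 = (\<lambda>i. if i = 1 then p a' e0 0 else 0)" by (simp add: arc_xa xe0 xe0')
  then show ?thesis using c1 by (metis)
qed

lemma L2:
  assumes arc: "is_arc (a,b)" and q: "hom (arc_mod (a,b)) Mc q"
    and w: "w \<in> comp (arc_mod (a,b)) n" and w0: "w 0 = 0"
  shows "q n w = vzero"
proof -
  let ?A = "arc_mod (a,b)"
  have lin: "\<And>n. clinear_on (comp ?A n) (q n)" using q unfolding hom_def by blast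
  have base: "\<And>n. n \<le> a + 1 \<Longrightarrow> q n e1 = vzero"
  proof -
    fix n assume "n \<le> a + 1"
    hence "e0 \<in> comp ?A (n - 1)" using arc by (simp add: arc_comp e0_def)
    hence "q (n - 1 + 1) (xa ?A (n - 1) e0) = xa Mc (n - 1) (q (n - 1) e0)" using q unfolding hom_def by blast
    then show "q n e1 = vzero" by (simp add: arc_xa xe0 xe0' Mc_simps)
  qed
  have e1A: "\<And>n. n \<le> b \<Longrightarrow> e1 \<in> comp ?A n" using arc by (simp add: arc_comp e1_def)
  have step: "\<And>n. n \<le> b \<Longrightarrow> q (n - 1) e1 = q n e1"
    using q e1A unfolding hom_def by (simp add: arc_ya Mc_simps)
  have ind: "\<And>m. a + 1 + int m \<le> b \<Longrightarrow> q (a + 1 + int m) e1 = vzero"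
  proof -
    fix m show "a + 1 + int m \<le> b \<Longrightarrow> q (a + 1 + int m) e1 = vzero"
    proof (induction m)
      case 0 then show ?case using base by simp
    next
      case (Suc m)
      have "q (a + 1 + int (Suc m) - 1) e1 = q (a + 1 + int (Suc m)) e1" by (rule step) (use Suc in simp)
      then show ?case using Suc by (simp add: algebra_simps)
    qed
  qed
  have e1z: "\<And>n. n \<le> b \<Longrightarrow> q n e1 = vzero"
  proof -
    fix n assume nb: "n \<le> b"
    show "q n e1 = vzero"
    proof (cases "n \<le> a + 1")
      case True then show ?thesis by (rule base)
    next
      case False
      then show ?thesis using ind[of "nat (n - a - 1)"] nb by simp
    qed
  qed
  have w2: "\<And>i. 2 \<le> i \<Longrightarrow> w i = 0" using w arc by (simp add: arc_comp)
  have wsc: "w = vsc (w 1) e1"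
  proof
    fix i :: nat
    show "w i = vsc (w 1) e1 i"
      using w0 w2[of i] by (cases "i = 0"; cases "i = 1") (auto simp: vsc_def e1_def)
  qed
  show ?thesis
  proof (cases "n \<le> b")
    case True
    have "q n w = vsc (w 1) (q n e1)" using lin[of n] e1A[OF True] wsc unfolding clinear_on_def by metis
    then show ?thesis using e1z[OF True] by (simp add: vsc_def vzero_def)
  next
    case False
    hence "w 1 = 0" using w arc by (simp add: arc_comp)
    hence "w = vzero" using wsc by (simp add: vsc_def vzero_def)
    moreover have "vzero \<in> comp ?A n" using arc by (simp add: arc_comp vzero_def)
    ultimately show ?thesis using lin_zero[OF lin] by simp
  qed
qed

lemma sum_lin:
  assumes l: "clinear_on S f" and s: "csubspace S" and fin: "finite I" and w: "\<forall>i\<in>I. w i \<in> S"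
  shows "(\<lambda>t. \<Sum>i\<in>I. w i t) \<in> S \<and> f (\<lambda>t. \<Sum>i\<in>I. w i t) = (\<lambda>t. \<Sum>i\<in>I. f (w i) t)"
  using fin w
proof (induction I rule: finite_induct)
  case empty
  have "vzero \<in> S" using s by (simp add: csubspace_def)
  moreover have "(\<lambda>t. \<Sum>i\<in>{}. w i t) = vzero" by (simp add: vzero_def)
  ultimately show ?case using lin_zero[OF l] by (simp add: vzero_def)
next
  case (insert x F)
  have eq: "(\<lambda>t. \<Sum>i\<in>insert x F. w i t) = vadd (w x) (\<lambda>t. \<Sum>i\<in>F. w i t)"
    using insert by (simp add: vadd_def)
  have mem: "(\<lambda>t. \<Sum>i\<in>F. w i t) \<in> S" and fe: "f (\<lambda>t. \<Sum>i\<in>F. w i t) = (\<lambda>t. \<Sum>i\<in>F. f (w i) t)"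
    using insert by auto
  have wx: "w x \<in> S" using insert by auto
  show ?case
  proof
    show "(\<lambda>t. \<Sum>i\<in>insert x F. w i t) \<in> S" unfolding eq using s mem wx by (simp add: csubspace_def)
    have "f (vadd (w x) (\<lambda>t. \<Sum>i\<in>F. w i t)) = vadd (f (w x)) (f (\<lambda>t. \<Sum>i\<in>F. w i t))"
      using l wx mem unfolding clinear_on_def by blast
    then show "f (\<lambda>t. \<Sum>i\<in>insert x F. w i t) = (\<lambda>t. \<Sum>i\<in>insert x F. f (w i) t)"
      unfolding eq fe using insert by (simp add: vadd_def)
  qed
qed


definition gproj :: gmor where "gproj = (\<lambda>n v. (\<lambda>t. if t = 0 then v 0 else 0))"

lemma hom_gproj: "is_arc (a,b) \<Longrightarrow> a \<le> 0 \<Longrightarrow> hom (arc_mod (a,b)) Mc gproj"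
  unfolding hom_def clinear_on_def
  by (auto simp: gproj_def arc_comp arc_xa arc_ya Mc_simps vadd_def vsc_def vzero_def fun_eq_iff)

lemma hom_mid: "hom M M mid"
  unfolding hom_def clinear_on_def mid_def by simp

lemma dsum_self: "is_dsum M 1 (\<lambda>_. M)"
  unfolding is_dsum_def
proof (intro exI conjI)
  show "\<forall>i<1. hom M M mid \<and> hom M M mid" using hom_mid by blast
  show "\<forall>i::nat<1. \<forall>j::nat<1. meq M (mcomp mid mid) (if i = j then mid else mzero)"
  proof (intro allI impI)
    fix i j :: nat assume "i < 1" "j < 1"
    then have "i = j" by simp
    then show "meq M (mcomp mid mid) (if i = j then mid else mzero)" by (simp add: meq_def mcomp_def mid_def)
  qed
  show "meq M (\<lambda>n v. (\<lambda>t. \<Sum>i\<in>{..<(1::nat)}. mid n (mid n v) t)) mid"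
    by (simp add: meq_def mid_def)
qed

lemma arc_in_subcat: "\<beta> \<in> T \<Longrightarrow> is_arc \<beta> \<Longrightarrow> arc_subcat T (arc_mod \<beta>)"
  unfolding arc_subcat_def
proof (intro conjI exI)
  assume "\<beta> \<in> T" "is_arc \<beta>"
  then show "C2obj (arc_mod \<beta>)" using C2_arc[of "fst \<beta>" "snd \<beta>"] by simp
  show "\<forall>i<1. \<exists>\<alpha>\<in>T. arc_mod \<beta> = arc_mod \<alpha>" using \<open>\<beta> \<in> T\<close> by blast
  show "is_dsum (arc_mod \<beta>) 1 (\<lambda>_. arc_mod \<beta>)" by (rule dsum_self)
qed

lemma hom_mem: "hom M N f \<Longrightarrow> v \<in> comp M n \<Longrightarrow> f n v \<in> comp N n"
  unfolding hom_def by blast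

lemma hom_lin: "hom M N f \<Longrightarrow> clinear_on (comp M n) (f n)"
  unfolding hom_def by blast

theorem propositionA6:
  fixes T :: "(int \<times> int) set"
  assumes "triangulation T" and "locally_finite T"
  shows "\<not> precovering (arc_subcat T) \<and> \<not> functorially_finite (arc_subcat T)"
proof -
  have arcs: "\<And>\<alpha>. \<alpha> \<in> T \<Longrightarrow> is_arc \<alpha>" using assms(1) unfolding triangulation_def by blast
  have np: "\<not> precovering (arc_subcat T)"
  proof
    assume "precovering (arc_subcat T)"
    then obtain X f where ra: "right_approx (arc_subcat T) Mc X f"
      using C2_Mc unfolding precovering_def by blast
    hence Xs: "arc_subcat T X" and hf: "hom X Mc f"
      and fact: "\<And>Y g. arc_subcat T Y \<Longrightarrow> hom Y Mc g \<Longrightarrow> \<exists>h. hom Y X h \<and> meq Y g (mcomp f h)"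
      unfolding right_approx_def by auto
    from Xs obtain k N where Nk: "\<forall>i<k. \<exists>\<alpha>\<in>T. N i = arc_mod \<alpha>" and ds: "is_dsum X k N"
      and Xc: "C2obj X" unfolding arc_subcat_def by blast
    from ds obtain \<iota> \<pi> where ip: "\<forall>i<k. hom (N i) X (\<iota> i) \<and> hom X (N i) (\<pi> i)"
      and sm: "meq X (\<lambda>n v. (\<lambda>t. \<Sum>i<k. \<iota> i n (\<pi> i n v) t)) mid" unfolding is_dsum_def by blast
    define sel where "sel i = (SOME \<alpha>. \<alpha> \<in> T \<and> N i = arc_mod \<alpha>)" for i
    have sel: "\<And>i. i < k \<Longrightarrow> sel i \<in> T \<and> N i = arc_mod (sel i)"
    proof -
      fix i assume "i < k"
      hence "\<exists>\<alpha>. \<alpha> \<in> T \<and> N i = arc_mod \<alpha>" using Nk by blast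
      then show "sel i \<in> T \<and> N i = arc_mod (sel i)" unfolding sel_def by (rule someI_ex)
    qed
    define B where "B = Max (insert 0 ((\<lambda>i. snd (sel i)) ` {..<k}))"
    have B: "\<And>i. i < k \<Longrightarrow> snd (sel i) \<le> B" unfolding B_def by simp
    obtain \<beta> where \<beta>0: "\<beta> \<in> T" "fst \<beta> \<le> 0" "B < snd \<beta>"
      using exists_big[OF assms, of 0 B] by blast
    obtain a' b' where \<beta>ab: "\<beta> = (a',b')" by (cases \<beta>)
    have \<beta>T: "(a',b') \<in> T" and a'0: "a' \<le> 0" and Bb: "B < b'" using \<beta>0 \<beta>ab by auto
    have arc': "is_arc (a',b')" using arcs \<beta>T by blast
    let ?Y = "arc_mod (a',b')"
    obtain h where hh: "hom ?Y X h" and mq: "meq ?Y gproj (mcomp f h)"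
      using fact[OF arc_in_subcat[OF \<beta>T arc'] hom_gproj[OF arc' a'0]] by blast
    have e0Y: "e0 \<in> comp ?Y a'" using arc' by (simp add: arc_comp e0_def)
    have "gproj a' e0 = f a' (h a' e0)" using mq e0Y unfolding meq_def mcomp_def by blast
    moreover have "gproj a' e0 = e0" by (simp add: gproj_def e0_def fun_eq_iff)
    ultimately have fe0: "f a' (h a' e0) = e0" by simp
    define w where "w = h a' e0"
    have wX: "w \<in> comp X a'" unfolding w_def by (rule hom_mem[OF hh e0Y])
    have "\<forall>v\<in>comp X a'. (\<lambda>t. \<Sum>i<k. \<iota> i a' (\<pi> i a' v) t) = v" using sm unfolding meq_def mid_def by blast
    hence wsum: "(\<lambda>t. \<Sum>i<k. \<iota> i a' (\<pi> i a' w) t) = w" using wX by blast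
    have memb: "\<forall>i\<in>{..<k}. \<iota> i a' (\<pi> i a' w) \<in> comp X a'"
      using ip wX hom_mem by blast
    have linf: "clinear_on (comp X a') (f a')" by (rule hom_lin[OF hf])
    have subX: "csubspace (comp X a')" using Xc unfolding C2obj_def graded_module_def by blast
    have "f a' (\<lambda>t. \<Sum>i<k. \<iota> i a' (\<pi> i a' w) t) = (\<lambda>t. \<Sum>i<k. f a' (\<iota> i a' (\<pi> i a' w)) t)"
      using sum_lin[OF linf subX _ memb] by simp
    hence "f a' w = (\<lambda>t. \<Sum>i<k. f a' (\<iota> i a' (\<pi> i a' w)) t)" unfolding wsum .
    moreover have "\<And>i. i < k \<Longrightarrow> f a' (\<iota> i a' (\<pi> i a' w)) = vzero"
    proof -
      fix i assume ik: "i < k"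
      obtain a b where si: "sel i = (a,b)" by (cases "sel i")
      have Ni: "N i = arc_mod (a,b)" and arc: "is_arc (a,b)" using sel[OF ik] arcs si by auto
      have bb: "b < b'" using B[OF ik] Bb si by simp
      have pi: "hom X (N i) (\<pi> i)" and ii: "hom (N i) X (\<iota> i)" using ip ik by blast+
      have p: "hom ?Y (arc_mod (a,b)) (mcomp (\<pi> i) h)" using hom_comp[OF hh pi] Ni by simp
      have q: "hom (arc_mod (a,b)) Mc (mcomp f (\<iota> i))" using hom_comp[OF ii hf] Ni by simp
      have pe: "mcomp (\<pi> i) h a' e0 \<in> comp (arc_mod (a,b)) a'" by (rule hom_mem[OF p e0Y])
      have "mcomp (mcomp f (\<iota> i)) (mcomp (\<pi> i) h) a' e0 = vzero"
        unfolding mcomp_def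
        using L2[OF arc q pe L1[OF arc arc' bb p]] unfolding mcomp_def .
      then show "f a' (\<iota> i a' (\<pi> i a' w)) = vzero" by (simp add: mcomp_def w_def)
    qed
    ultimately have "f a' w = vzero" unfolding vzero_def by simp
    then show False using fe0 e_ne w_def by simp
  qed
  then show ?thesis unfolding functorially_finite_def by blast
qed

end
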